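(* Let $\mathcal{T}$ be a projective Fraïssé family of finite trees whose distinguished epimorphisms are monotone and which allows splitting edges. Let $(G_i)_{i<\omega}$ with epimorphisms $f^m_n\colon G_m\to G_n$ be a Fraïssé sequence for $\mathcal{T}$, let $\mathbb{G}=\varprojlim G_i\subseteq\prod_i G_i$ be the projective Fraïssé limit and $\pi\colon\mathbb{G}\to|\mathbb{G}|$ its topological realization. Then $\pi$ maps every point of weak coherence of $\mathbb{G}$ to a ramification point of the dendrite $|\mathbb{G}|$.
   Context: Graphs have reflexive symmetric edge relations; topological graphs carry a compact, Hausdorff, zero-dimensional, second countable topology with closed edge set; finite graphs are discrete. An epimorphism $g\colon B\to A$ of topological graphs is a continuous surjection with: $\langle a_1,a_2\rangle\in E(A)$ iff some $b_i\in g^{-1}(a_i)$ satisfy $\langle b_1,b_2\rangle\in E(B)$. Connectedness: a topological graph is disconnected if its vertex set splits into two nonempty disjoint closed sets with no edges between them. An epimorphism is monotone if all fibres are connected. A finite tree is a finite connected graph without cycles of nontrivial edges; the order $\mathrm{ord}(a)$ of a vertex is its number of neighbours other than itself (= number of components of the tree minus $a$). For a monotone epimorphism $f\colon B\to A$ of finite trees and $a\in A$ with $\mathrm{ord}(a)=n\ge3$, let $A_0,\dots,A_{n-1}$ be the components of $A\setminus\{a\}$; $a$ is a point of weak coherence of $f$, witnessed by $b$, if $b\in f^{-1}(a)$, $m=\mathrm{ord}(b)\ge n$, and there is an injection $p\colon n\to m$ such that, with $B_0,\dots,B_{m-1}$ the components of $B\setminus\{b\}$, $f^{-1}(A_i)\subseteq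 B_{p(i)}$ for all $i$. A point $x=(x_i)\in\varprojlim G_i$ is a point of weak coherence of the limit if there is $k$ such that for all $l>k$, $x_l$ is a point of weak coherence of $f^{l+1}_l$ witnessed by $x_{l+1}$. A projective Fraïssé family is a class of finite graphs with a distinguished class of epimorphisms, countably many up to isomorphism, containing identities, closed under composition, with joint projection and projective amalgamation. A Fraïssé sequence is a sequence $(G_n)$ with compatible distinguished epimorphisms $f^m_n$ such that every member of the family is the image of some $G_n$ under a distinguished epimorphism, and for every distinguished $f\colon A\to G_m$ there are $n\ge m$ and distinguished $g\colon G_n\to A$ with $f\circ g=f^n_m$; its inverse limit (edges coordinatewise) is the projective Fraïssé limit. Allowing splitting edges: for every member $G$ and nontrivial edge $\{a,b\}$, replacing it by a path $a,\ast,b$ through a new vertex gives a member, and the maps collapsing $\ast$ to $a$, resp. $b$, are distinguished. Under these hypotheses $\mathbb G$ is a prespace (edge relation an equivalence relation), $\pi$ is the quotient map onto $|\mathbb{G}|=\mathbb{G}/E(\mathbb{G})$, and $|\mathbb{G}|$ is a dendrite (compact metrizable connected locally connected space with unique arcs between points). A ramification point of a dendrite $X$ is a point $x$ with $X\setminus\{x\}$ having more than two components. *)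

theory Defs
  imports "HOL-Analysis.Analysis"
begin

type_synonym graph = "nat set \<times> (nat \<times> nat) set"

definition verts :: "graph \<Rightarrow> nat set" where "verts G = fst G"
definition edges :: "graph \<Rightarrow> (nat \<times> nat) set" where "edges G = snd G"

definition fin_graph :: "graph \<Rightarrow> bool" where
  "fin_graph G \<longleftrightarrow> finite (verts G) \<and> edges G \<subseteq> verts G \<times> verts G
     \<and> (\<forall>a\<in>verts G. (a, a) \<in> edges G) \<and> (\<forall>a b. (a, b) \<in> edges G \<longrightarrow> (b, a) \<in> edges G)"

text \<open>Epimorphism g : B \<rightarrow> A (only the values on verts B matter).\<close>
definition epi :: "graph \<Rightarrow> graph \<Rightarrow> (nat \<Rightarrow> nat) \<Rightarrow> bool" where
  "epi B A g \<longleftrightarrow> g ` verts B = verts A \<and>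
     (\<forall>a1 a2. (a1, a2) \<in> edges A \<longleftrightarrow>
        (\<exists>b1 b2. b1 \<in> verts B \<and> b2 \<in> verts B \<and> g b1 = a1 \<and> g b2 = a2 \<and> (b1, b2) \<in> edges B))"

definition connected_set :: "graph \<Rightarrow> nat set \<Rightarrow> bool" where
  "connected_set G S \<longleftrightarrow> \<not> (\<exists>P Q. P \<union> Q = S \<and> P \<inter> Q = {} \<and> P \<noteq> {} \<and> Q \<noteq> {} \<and>
      (\<forall>p\<in>P. \<forall>q\<in>Q. (p, q) \<notin> edges G))"

definition gconnected :: "graph \<Rightarrow> bool" where
  "gconnected G \<longleftrightarrow> connected_set G (verts G)"

definition comps :: "graph \<Rightarrow> nat set \<Rightarrow> nat set set" where
  "comps G S = {C. C \<subseteq> S \<and> C \<noteq> {} \<and> connected_set G C \<and>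
      (\<forall>D. C \<subseteq> D \<and> D \<subseteq> S \<and> connected_set G D \<longrightarrow> D = C)}"

definition has_cycle :: "graph \<Rightarrow> bool" where
  "has_cycle G \<longleftrightarrow> (\<exists>xs. distinct xs \<and> length xs \<ge> 3 \<and> set xs \<subseteq> verts G \<and>
      (\<forall>i. Suc i < length xs \<longrightarrow> (xs ! i, xs ! Suc i) \<in> edges G) \<and>
      (last xs, hd xs) \<in> edges G)"

definition fin_tree :: "graph \<Rightarrow> bool" where
  "fin_tree G \<longleftrightarrow> fin_graph G \<and> gconnected G \<and> \<not> has_cycle G"

definition ord :: "graph \<Rightarrow> nat \<Rightarrow> nat" where
  "ord G a = card {b \<in> verts G. b \<noteq> a \<and> (a, b) \<in> edges G}"

definition monotone_epi :: "graph \<Rightarrow> graph \<Rightarrow> (nat \<Rightarrow> nat) \<Rightarrow> bool" where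
  "monotone_epi B A f \<longleftrightarrow> epi B A f \<and>
     (\<forall>a\<in>verts A. connected_set B {b \<in> verts B. f b = a})"

definition weak_coh_pt :: "graph \<Rightarrow> graph \<Rightarrow> (nat \<Rightarrow> nat) \<Rightarrow> nat \<Rightarrow> nat \<Rightarrow> bool" where
  "weak_coh_pt B A f a b \<longleftrightarrow> a \<in> verts A \<and> ord A a \<ge> 3 \<and> b \<in> verts B \<and> f b = a \<and>
     ord B b \<ge> ord A a \<and>
     (\<exists>p. inj_on p (comps A (verts A - {a})) \<and>
          p ` comps A (verts A - {a}) \<subseteq> comps B (verts B - {b}) \<and>
          (\<forall>C \<in> comps A (verts A - {a}). {x \<in> verts B. f x \<in> C} \<subseteq> p C))"

text \<open>A family: a set of finite graphs and a set of distinguished epimorphisms,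
  given as triples (domain, codomain, map).\<close>

type_synonym family = "graph set \<times> (graph \<times> graph \<times> (nat \<Rightarrow> nat)) set"

definition distg :: "family \<Rightarrow> graph \<Rightarrow> graph \<Rightarrow> (nat \<Rightarrow> nat) \<Rightarrow> bool" where
  "distg \<F> B A f \<longleftrightarrow> (\<exists>h. (B, A, h) \<in> snd \<F> \<and> (\<forall>x\<in>verts B. h x = f x))"

definition proj_fraisse_family :: "family \<Rightarrow> bool" where
  "proj_fraisse_family \<F> \<longleftrightarrow>
     (\<forall>G\<in>fst \<F>. fin_graph G) \<and>
     (\<forall>(B, A, f)\<in>snd \<F>. B \<in> fst \<F> \<and> A \<in> fst \<F> \<and> epi B A f) \<and>
     (\<forall>G\<in>fst \<F>. distg \<F> G G id) \<and>
     (\<forall>C B A g f. distg \<F> C B g \<and> distg \<F> B A f \<longrightarrow> distg \<F> C A (f \<circ> g)) \<and>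
     (\<forall>A\<in>fst \<F>. \<forall>B\<in>fst \<F>. \<exists>C\<in>fst \<F>. \<exists>f g. distg \<F> C A f \<and> distg \<F> C B g) \<and>
     (\<forall>A B C f g. distg \<F> B A f \<and> distg \<F> C A g \<longrightarrow>
        (\<exists>D\<in>fst \<F>. \<exists>f' g'. distg \<F> D B f' \<and> distg \<F> D C g' \<and>
            (\<forall>x\<in>verts D. f (f' x) = g (g' x))))"

definition split_edge :: "graph \<Rightarrow> nat \<Rightarrow> nat \<Rightarrow> nat \<Rightarrow> graph" where
  "split_edge G a b c = (insert c (verts G),
     (edges G - {(a, b), (b, a)}) \<union> {(a, c), (c, a), (c, b), (b, c), (c, c)})"

definition allows_splitting_edges :: "family \<Rightarrow> bool" where
  "allows_splitting_edges \<F> \<longleftrightarrow>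
     (\<forall>G\<in>fst \<F>. \<forall>a b. (a, b) \<in> edges G \<and> a \<noteq> b \<longrightarrow>
        (\<exists>c. c \<notin> verts G \<and> split_edge G a b c \<in> fst \<F> \<and>
             distg \<F> (split_edge G a b c) G (\<lambda>x. if x = c then a else x) \<and>
             distg \<F> (split_edge G a b c) G (\<lambda>x. if x = c then b else x)))"

text \<open>Fraisse sequence: graphs G n and maps fs m n : G m \<rightarrow> G n for n \<le> m.\<close>
definition fraisse_sequence ::
  "family \<Rightarrow> (nat \<Rightarrow> graph) \<Rightarrow> (nat \<Rightarrow> nat \<Rightarrow> nat \<Rightarrow> nat) \<Rightarrow> bool" where
  "fraisse_sequence \<F> G fs \<longleftrightarrow>
     (\<forall>n. G n \<in> fst \<F>) \<and>
     (\<forall>n m. n \<le> m \<longrightarrow> distg \<F> (G m) (G n) (fs m n)) \<and>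
     (\<forall>n. \<forall>x\<in>verts (G n). fs n n x = x) \<and>
     (\<forall>n m k. n \<le> m \<and> m \<le> k \<longrightarrow> (\<forall>x\<in>verts (G k). fs m n (fs k m x) = fs k n x)) \<and>
     (\<forall>A\<in>fst \<F>. \<exists>n f. distg \<F> (G n) A f) \<and>
     (\<forall>m A f. A \<in> fst \<F> \<and> distg \<F> A (G m) f \<longrightarrow>
        (\<exists>n\<ge>m. \<exists>g. distg \<F> (G n) A g \<and> (\<forall>x\<in>verts (G n). f (g x) = fs n m x)))"

definition lim_pts :: "(nat \<Rightarrow> graph) \<Rightarrow> (nat \<Rightarrow> nat \<Rightarrow> nat \<Rightarrow> nat) \<Rightarrow> (nat \<Rightarrow> nat) set" where
  "lim_pts G fs = {x. (\<forall>i. x i \<in> verts (G i)) \<and> (\<forall>n m. n \<le> m \<longrightarrow> fs m n (x m) = x n)}"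

definition lim_edges :: "(nat \<Rightarrow> graph) \<Rightarrow> (nat \<Rightarrow> nat \<Rightarrow> nat \<Rightarrow> nat) \<Rightarrow> ((nat \<Rightarrow> nat) \<times> (nat \<Rightarrow> nat)) set" where
  "lim_edges G fs = {(x, y). x \<in> lim_pts G fs \<and> y \<in> lim_pts G fs \<and> (\<forall>i. (x i, y i) \<in> edges (G i))}"

definition lim_top :: "(nat \<Rightarrow> graph) \<Rightarrow> (nat \<Rightarrow> nat \<Rightarrow> nat \<Rightarrow> nat) \<Rightarrow> (nat \<Rightarrow> nat) topology" where
  "lim_top G fs = subtopology (product_topology (\<lambda>i. discrete_topology (verts (G i))) UNIV) (lim_pts G fs)"

text \<open>Quotient map onto equivalence classes of the edge relation.\<close>
definition realize :: "(nat \<Rightarrow> graph) \<Rightarrow> (nat \<Rightarrow> nat \<Rightarrow> nat \<Rightarrow> nat) \<Rightarrow> (nat \<Rightarrow> nat) \<Rightarrow> (nat \<Rightarrow> nat) set" where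
  "realize G fs x = {y. (x, y) \<in> lim_edges G fs}"

definition quotient_topology :: "'a topology \<Rightarrow> ('a \<Rightarrow> 'b) \<Rightarrow> 'b topology" where
  "quotient_topology X q = topology (\<lambda>U. U \<subseteq> q ` topspace X \<and> openin X {x \<in> topspace X. q x \<in> U})"

definition realization :: "(nat \<Rightarrow> graph) \<Rightarrow> (nat \<Rightarrow> nat \<Rightarrow> nat \<Rightarrow> nat) \<Rightarrow> (nat \<Rightarrow> nat) set topology" where
  "realization G fs = quotient_topology (lim_top G fs) (realize G fs)"

definition ramification_point :: "'a topology \<Rightarrow> 'a \<Rightarrow> bool" where
  "ramification_point X p \<longleftrightarrow> p \<in> topspace X \<and>
     (\<exists>C1 C2 C3. C1 \<in> connected_components_of (subtopology X (topspace X - {p})) \<and>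
                 C2 \<in> connected_components_of (subtopology X (topspace X - {p})) \<and>
                 C3 \<in> connected_components_of (subtopology X (topspace X - {p})) \<and>
                 C1 \<noteq> C2 \<and> C1 \<noteq> C3 \<and> C2 \<noteq> C3)"

definition weak_coh_lim :: "(nat \<Rightarrow> graph) \<Rightarrow> (nat \<Rightarrow> nat \<Rightarrow> nat \<Rightarrow> nat) \<Rightarrow> (nat \<Rightarrow> nat) \<Rightarrow> bool" where
  "weak_coh_lim G fs x \<longleftrightarrow> x \<in> lim_pts G fs \<and>
     (\<exists>k. \<forall>l>k. weak_coh_pt (G (Suc l)) (G l) (fs (Suc l) l) (x l) (x (Suc l)))"

end

theory Submission
  imports Defs
begin



lemma openin_quotient:
  "openin (quotient_topology X q) U \<longleftrightarrow> U \<subseteq> q ` topspace X \<and> openin X {x \<in> topspace X. q x \<in> U}"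
proof -
  have "istopology (\<lambda>U. U \<subseteq> q ` topspace X \<and> openin X {x \<in> topspace X. q x \<in> U})"
  proof -
    have 1: "\<forall>S T. (S \<subseteq> q ` topspace X \<and> openin X {x \<in> topspace X. q x \<in> S}) \<longrightarrow>
        (T \<subseteq> q ` topspace X \<and> openin X {x \<in> topspace X. q x \<in> T}) \<longrightarrow>
        (S \<inter> T \<subseteq> q ` topspace X \<and> openin X {x \<in> topspace X. q x \<in> S \<inter> T})"
    proof (intro allI impI)
      fix S T assume S: "S \<subseteq> q ` topspace X \<and> openin X {x \<in> topspace X. q x \<in> S}"
        and T: "T \<subseteq> q ` topspace X \<and> openin X {x \<in> topspace X. q x \<in> T}"
      have "{x \<in> topspace X. q x \<in> S \<inter> T} = {x \<in> topspace X. q x \<in> S} \<inter> {x \<in> topspace X. q x \<in> T}" by auto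
      moreover have "openin X ({x \<in> topspace X. q x \<in> S} \<inter> {x \<in> topspace X. q x \<in> T})"
        using S T by (intro openin_Int) auto
      ultimately show "S \<inter> T \<subseteq> q ` topspace X \<and> openin X {x \<in> topspace X. q x \<in> S \<inter> T}"
        using S by auto
    qed
    have 2: "\<forall>K. (\<forall>S\<in>K. S \<subseteq> q ` topspace X \<and> openin X {x \<in> topspace X. q x \<in> S}) \<longrightarrow>
        (\<Union>K \<subseteq> q ` topspace X \<and> openin X {x \<in> topspace X. q x \<in> \<Union>K})"
    proof (intro allI impI)
      fix K assume K: "\<forall>S\<in>K. S \<subseteq> q ` topspace X \<and> openin X {x \<in> topspace X. q x \<in> S}"
      have "{x \<in> topspace X. q x \<in> \<Union>K} = \<Union>((\<lambda>S. {x \<in> topspace X. q x \<in> S}) ` K)" by auto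
      moreover have "openin X (\<Union>((\<lambda>S. {x \<in> topspace X. q x \<in> S}) ` K))"
        by (rule openin_Union) (use K in blast)
      moreover have "\<Union>K \<subseteq> q ` topspace X" using K by blast
      ultimately show "\<Union>K \<subseteq> q ` topspace X \<and> openin X {x \<in> topspace X. q x \<in> \<Union>K}"
        by simp
    qed
    show ?thesis unfolding istopology_def by (rule conjI[OF 1 2])
  qed
  then show ?thesis unfolding quotient_topology_def by simp
qed

lemma topspace_quotient: "topspace (quotient_topology X q) = q ` topspace X"
proof -
  have "openin (quotient_topology X q) (q ` topspace X)"
    unfolding openin_quotient proof -
    have "{x \<in> topspace X. q x \<in> q ` topspace X} = topspace X" by auto
    then show "q ` topspace X \<subseteq> q ` topspace X \<and> openin X {x \<in> topspace X. q x \<in> q ` topspace X}" by simp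
  qed
  then have "q ` topspace X \<subseteq> topspace (quotient_topology X q)" by (rule openin_subset)
  moreover have "topspace (quotient_topology X q) \<subseteq> q ` topspace X"
    using openin_quotient[of X q "topspace (quotient_topology X q)"] by simp
  ultimately show ?thesis by blast
qed

lemma sep_comp:
  assumes "openin Y A" "openin Y B" "A \<inter> B = {}" "topspace Y \<subseteq> A \<union> B" "a \<in> A" "b \<in> B"
  shows "connected_component_of_set Y a \<noteq> connected_component_of_set Y b"
proof
  assume eq: "connected_component_of_set Y a = connected_component_of_set Y b"
  define C where "C = connected_component_of_set Y a"
  have ta: "a \<in> topspace Y" using assms(1,5) openin_subset by blast
  have tb: "b \<in> topspace Y" using assms(2,6) openin_subset by blast
  have 1: "a \<in> C" unfolding C_def using connected_component_of_refl[THEN iffD2, OF ta] by simp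
  have 2: "b \<in> C" unfolding C_def eq using connected_component_of_refl[THEN iffD2, OF tb] by simp
  have 3: "C \<subseteq> topspace Y" unfolding C_def by (rule connected_component_of_subset_topspace)
  have c: "connectedin Y C" unfolding C_def by (rule connectedin_connected_component_of)
  have 4: "C \<subseteq> A \<union> B" using 3 assms(4) by blast
  have 5: "A \<inter> B \<inter> C = {}" using assms(3) by blast
  have 6: "A \<inter> C \<noteq> {}" using 1 assms(5) by blast
  have 7: "B \<inter> C \<noteq> {}" using 2 assms(6) by blast
  show False by (rule connectedinD[OF c assms(1,2) 4 5 6 7])
qed

lemma three_components:
  assumes o: "openin Y U0" "openin Y U1" "openin Y U2"
    and d: "U0 \<inter> U1 = {}" "U0 \<inter> U2 = {}" "U1 \<inter> U2 = {}"
    and ne: "U0 \<noteq> {}" "U1 \<noteq> {}" "U2 \<noteq> {}"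
    and cov: "topspace Y \<subseteq> U0 \<union> U1 \<union> U2"
  shows "\<exists>C1 C2 C3. C1 \<in> connected_components_of Y \<and> C2 \<in> connected_components_of Y \<and>
     C3 \<in> connected_components_of Y \<and> C1 \<noteq> C2 \<and> C1 \<noteq> C3 \<and> C2 \<noteq> C3"
proof -
  note sep = sep_comp[of Y]
  obtain a0 a1 a2 where a: "a0 \<in> U0" "a1 \<in> U1" "a2 \<in> U2" using ne by blast
  have t: "a0 \<in> topspace Y" "a1 \<in> topspace Y" "a2 \<in> topspace Y"
    using a o openin_subset by blast+
  have o12: "openin Y (U1 \<union> U2)" "openin Y (U0 \<union> U2)" using o by (simp_all add: openin_Un)
  have c1: "topspace Y \<subseteq> U0 \<union> (U1 \<union> U2)" "topspace Y \<subseteq> U1 \<union> (U0 \<union> U2)" using cov by blast+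
  have d1: "U0 \<inter> (U1 \<union> U2) = {}" "U1 \<inter> (U0 \<union> U2) = {}" using d by blast+
  have n1: "connected_component_of_set Y a0 \<noteq> connected_component_of_set Y a1"
    by (rule sep[OF o(1) o12(1) d1(1) c1(1) a(1)]) (use a in blast)
  have n2: "connected_component_of_set Y a0 \<noteq> connected_component_of_set Y a2"
    by (rule sep[OF o(1) o12(1) d1(1) c1(1) a(1)]) (use a in blast)
  have n3: "connected_component_of_set Y a1 \<noteq> connected_component_of_set Y a2"
    by (rule sep[OF o(2) o12(2) d1(2) c1(2) a(2)]) (use a in blast)
  have m: "connected_component_of_set Y a0 \<in> connected_components_of Y"
     "connected_component_of_set Y a1 \<in> connected_components_of Y"
     "connected_component_of_set Y a2 \<in> connected_components_of Y"
    using t by (simp_all only: connected_component_in_connected_components_of)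
  show ?thesis by (rule exI[of _ "connected_component_of_set Y a0"], rule exI[of _ "connected_component_of_set Y a1"],
     rule exI[of _ "connected_component_of_set Y a2"]) (intro conjI m n1 n2 n3)
qed




lemma connected_setD:
  assumes "connected_set G S" "P \<union> Q = S" "P \<inter> Q = {}" "P \<noteq> {}" "Q \<noteq> {}"
  shows "\<exists>p\<in>P. \<exists>q\<in>Q. (p, q) \<in> edges G"
proof (rule ccontr)
  assume "\<not> ?thesis"
  then have ne: "\<forall>p\<in>P. \<forall>q\<in>Q. (p, q) \<notin> edges G" by blast
  have "\<exists>P Q. P \<union> Q = S \<and> P \<inter> Q = {} \<and> P \<noteq> {} \<and> Q \<noteq> {} \<and>
      (\<forall>p\<in>P. \<forall>q\<in>Q. (p, q) \<notin> edges G)"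
    by (intro exI[of _ P] exI[of _ Q]) (use assms(2-5) ne in simp)
  then show False using assms(1) unfolding connected_set_def by simp
qed

lemma conn_Union:
  assumes "\<forall>D\<in>K. connected_set G D \<and> v \<in> D"
  shows "connected_set G (\<Union>K)"
  unfolding connected_set_def
proof (rule notI, elim exE conjE)
  fix P Q assume PQ: "P \<union> Q = \<Union>K" "P \<inter> Q = {}" "P \<noteq> {}" "Q \<noteq> {}"
    and ne: "\<forall>p\<in>P. \<forall>q\<in>Q. (p, q) \<notin> edges G"
  have side: "D \<subseteq> P \<or> D \<subseteq> Q" if D: "D \<in> K" for D
  proof (rule ccontr)
    assume "\<not> (D \<subseteq> P \<or> D \<subseteq> Q)"
    then have "D \<inter> P \<noteq> {}" "D \<inter> Q \<noteq> {}" using PQ(1) D by blast+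
    moreover have "(D \<inter> P) \<union> (D \<inter> Q) = D" using PQ(1) D by blast
    moreover have "(D \<inter> P) \<inter> (D \<inter> Q) = {}" using PQ(2) by blast
    moreover have "\<forall>p\<in>D \<inter> P. \<forall>q\<in>D \<inter> Q. (p, q) \<notin> edges G" using ne by blast
    ultimately obtain p q where "p \<in> D \<inter> P" "q \<in> D \<inter> Q" "(p, q) \<in> edges G"
      using connected_setD[of G D "D \<inter> P" "D \<inter> Q"] assms D by blast
    then show False using ne by blast
  qed
  obtain p where "p \<in> P" using PQ by blast
  then obtain D0 where "D0 \<in> K" using PQ(1) by blast
  then have vK: "v \<in> \<Union>K" using assms by blast
  show False
  proof (cases "v \<in> P")
    case True
    have "\<forall>D\<in>K. D \<subseteq> P" using side assms True PQ(2) by blast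
    then have "Q = {}" using PQ(1,2) by blast
    then show False using PQ by blast
  next
    case False
    then have vQ: "v \<in> Q" using vK PQ(1) by blast
    have "\<forall>D\<in>K. D \<subseteq> Q" using side assms vQ PQ(2) by blast
    then have "P = {}" using PQ(1,2) by blast
    then show False using PQ by blast
  qed
qed

lemma conn_Un2:
  assumes "connected_set G C" "connected_set G D" "v \<in> C" "v \<in> D"
  shows "connected_set G (C \<union> D)"
proof -
  have "\<forall>X\<in>{C, D}. connected_set G X \<and> v \<in> X" using assms by simp
  then have "connected_set G (\<Union>{C, D})" by (rule conn_Union)
  then show ?thesis by simp
qed

lemma conn_single: "connected_set G {v}"
  unfolding connected_set_def
proof (rule notI, elim exE conjE)
  fix P Q assume PQ: "P \<union> Q = {v}" "P \<inter> Q = {}" "P \<noteq> {}" "Q \<noteq> {}"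
  obtain p where p: "p \<in> P" using PQ(3) by blast
  obtain q where q: "q \<in> Q" using PQ(4) by blast
  have "p = v" using p PQ(1) by blast
  moreover have "q = v" using q PQ(1) by blast
  ultimately show False using p q PQ(2) by blast
qed

lemma conn_edge:
  assumes "(u, v) \<in> edges G" "(v, u) \<in> edges G"
  shows "connected_set G {u, v}"
  unfolding connected_set_def
proof (rule notI, elim exE conjE)
  fix P Q assume PQ: "P \<union> Q = {u, v}" "P \<inter> Q = {}" "P \<noteq> {}" "Q \<noteq> {}"
    and ne: "\<forall>p\<in>P. \<forall>q\<in>Q. (p, q) \<notin> edges G"
  show False
  proof (cases "u \<in> P")
    case True
    obtain q where q: "q \<in> Q" using PQ(4) by blast
    have "q \<in> {u, v}" using q PQ(1) by blast
    moreover have "q \<noteq> u" using q True PQ(2) by blast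
    ultimately have "q = v" by simp
    then show False using ne True q assms(1) by simp
  next
    case False
    then have uQ: "u \<in> Q" using PQ(1) by blast
    obtain p where p: "p \<in> P" using PQ(3) by blast
    have "p \<in> {u, v}" using p PQ(1) by blast
    moreover have "p \<noteq> u" using p False by blast
    ultimately have "p = v" by simp
    then show False using ne uQ p assms(2) by simp
  qed
qed

lemma compsD:
  assumes "C \<in> comps G S"
  shows "C \<subseteq> S" "C \<noteq> {}" "connected_set G C"
  using assms unfolding comps_def by simp_all

lemma comps_max:
  assumes "C \<in> comps G S" "C \<subseteq> D" "D \<subseteq> S" "connected_set G D"
  shows "D = C"
proof -
  have "\<forall>D. C \<subseteq> D \<and> D \<subseteq> S \<and> connected_set G D \<longrightarrow> D = C"
    using assms(1) unfolding comps_def by simp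
  then show ?thesis using assms(2-4) by simp
qed

lemma compsI:
  assumes "C \<subseteq> S" "C \<noteq> {}" "connected_set G C"
    "\<And>D. C \<subseteq> D \<Longrightarrow> D \<subseteq> S \<Longrightarrow> connected_set G D \<Longrightarrow> D = C"
  shows "C \<in> comps G S"
  unfolding comps_def using assms by simp

lemma comps_disj:
  assumes "C \<in> comps G S" "D \<in> comps G S" "x \<in> C" "x \<in> D"
  shows "C = D"
proof -
  have c: "connected_set G (C \<union> D)"
    by (rule conn_Un2[of G C D x]) (use assms compsD in simp_all)
  have s: "C \<union> D \<subseteq> S" using compsD(1)[OF assms(1)] compsD(1)[OF assms(2)] by simp
  have "C \<union> D = C" by (rule comps_max[OF assms(1) _ s c]) simp
  moreover have "C \<union> D = D" by (rule comps_max[OF assms(2) _ s c]) simp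
  ultimately show ?thesis by simp
qed

lemma comps_cover:
  assumes "v \<in> S"
  shows "\<exists>C\<in>comps G S. v \<in> C"
proof -
  define K where "K = {D. D \<subseteq> S \<and> connected_set G D \<and> v \<in> D}"
  have vK: "{v} \<in> K" unfolding K_def using assms conn_single by simp
  have c: "connected_set G (\<Union>K)" by (rule conn_Union[of K G v]) (simp add: K_def)
  have "\<Union>K \<in> comps G S"
  proof (rule compsI)
    show "\<Union>K \<subseteq> S" unfolding K_def by blast
    show "\<Union>K \<noteq> {}" using vK by blast
    show "connected_set G (\<Union>K)" by (rule c)
    fix D assume D: "\<Union>K \<subseteq> D" "D \<subseteq> S" "connected_set G D"
    have "v \<in> D" using vK D(1) by blast
    then have "D \<in> K" unfolding K_def using D by simp
    then have "D \<subseteq> \<Union>K" by blast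
    then show "D = \<Union>K" using D(1) by simp
  qed
  moreover have "v \<in> \<Union>K" using vK by blast
  ultimately show ?thesis by blast
qed

lemma comps_adj:
  assumes "C \<in> comps G S" "c \<in> C" "y \<in> S" "(c, y) \<in> edges G" "(y, c) \<in> edges G"
  shows "y \<in> C"
proof -
  have c: "connected_set G (C \<union> {c, y})"
    by (rule conn_Un2[of G C "{c, y}" c]) (use compsD(3)[OF assms(1)] conn_edge[OF assms(4,5)] assms(2) in simp_all)
  have s: "C \<union> {c, y} \<subseteq> S" using compsD(1)[OF assms(1)] assms(2,3) by blast
  have "C \<union> {c, y} = C" by (rule comps_max[OF assms(1) _ s c]) blast
  then show ?thesis by blast
qed

lemma comps_sub: "C \<in> comps G S \<Longrightarrow> C \<subseteq> S"
  by (rule compsD(1))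

fun walk :: "(nat \<times> nat) set \<Rightarrow> nat list \<Rightarrow> bool" where
  "walk E [] = True"
| "walk E [v] = True"
| "walk E (v # w # r) = ((v, w) \<in> E \<and> walk E (w # r))"

lemma walk_append:
  "walk E (A @ B) \<longleftrightarrow> walk E A \<and> walk E B \<and> (A \<noteq> [] \<longrightarrow> B \<noteq> [] \<longrightarrow> (last A, hd B) \<in> E)"
proof (induction A)
  case Nil then show ?case by simp
next
  case (Cons a A)
  then show ?case by (cases A; cases B) auto
qed

lemma walk_index:
  "walk E xs \<longleftrightarrow> (\<forall>i. Suc i < length xs \<longrightarrow> (xs ! i, xs ! Suc i) \<in> E)"
proof (induction E xs rule: walk.induct)
  case (3 E v w r)
  have "(\<forall>i. Suc i < length (v # w # r) \<longrightarrow> ((v # w # r) ! i, (v # w # r) ! Suc i) \<in> E) \<longleftrightarrow>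
        (v, w) \<in> E \<and> (\<forall>i. Suc i < length (w # r) \<longrightarrow> ((w # r) ! i, (w # r) ! Suc i) \<in> E)"
  proof
    assume H: "\<forall>i. Suc i < length (v # w # r) \<longrightarrow> ((v # w # r) ! i, (v # w # r) ! Suc i) \<in> E"
    show "(v, w) \<in> E \<and> (\<forall>i. Suc i < length (w # r) \<longrightarrow> ((w # r) ! i, (w # r) ! Suc i) \<in> E)"
    proof
      show "(v, w) \<in> E" using H[rule_format, of 0] by simp
      show "\<forall>i. Suc i < length (w # r) \<longrightarrow> ((w # r) ! i, (w # r) ! Suc i) \<in> E"
      proof (intro allI impI)
        fix i assume "Suc i < length (w # r)"
        then show "((w # r) ! i, (w # r) ! Suc i) \<in> E" using H[rule_format, of "Suc i"] by simp
      qed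
    qed
  next
    assume H: "(v, w) \<in> E \<and> (\<forall>i. Suc i < length (w # r) \<longrightarrow> ((w # r) ! i, (w # r) ! Suc i) \<in> E)"
    show "\<forall>i. Suc i < length (v # w # r) \<longrightarrow> ((v # w # r) ! i, (v # w # r) ! Suc i) \<in> E"
    proof (intro allI impI)
      fix i assume i: "Suc i < length (v # w # r)"
      show "((v # w # r) ! i, (v # w # r) ! Suc i) \<in> E"
      proof (cases i)
        case 0 then show ?thesis using H by simp
      next
        case (Suc j) then show ?thesis using H i by simp
      qed
    qed
  qed
  then show ?case using 3 by simp
qed auto

definition wpath :: "graph \<Rightarrow> nat set \<Rightarrow> nat \<Rightarrow> nat \<Rightarrow> nat list \<Rightarrow> bool" where
  "wpath G C u v xs \<longleftrightarrow> xs \<noteq> [] \<and> hd xs = u \<and> last xs = v \<and> set xs \<subseteq> C \<and> walk (edges G) xs"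

lemma wpath_exists:
  assumes "connected_set G C" "u \<in> C" "w \<in> C"
  shows "\<exists>xs. wpath G C u w xs"
proof (rule ccontr)
  assume nw: "\<nexists>xs. wpath G C u w xs"
  define R where "R = {v \<in> C. \<exists>xs. wpath G C u v xs}"
  have uR: "u \<in> R" unfolding R_def wpath_def using assms(2) by (intro CollectI conjI exI[of _ "[u]"]) auto
  have wR: "w \<in> C - R" unfolding R_def using nw assms(3) by blast
  have "\<exists>p\<in>R. \<exists>q\<in>C - R. (p, q) \<in> edges G"
    by (rule connected_setD[OF assms(1)]) (use uR wR in \<open>auto simp: R_def\<close>)
  then obtain p q xs where p: "p \<in> C" "wpath G C u p xs" and q: "q \<in> C" "q \<notin> R" and e: "(p, q) \<in> edges G"
    unfolding R_def by blast
  have "wpath G C u q (xs @ [q])"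
    using p q e unfolding wpath_def by (auto simp: walk_append)
  then show False using q unfolding R_def by blast
qed

lemma wpath_distinct:
  assumes "wpath G C u w xs"
  shows "\<exists>ys. wpath G C u w ys \<and> distinct ys"
proof -
  obtain n where n: "\<exists>xs. wpath G C u w xs \<and> length xs = n" using assms by blast
  from ex_has_least_nat[of "\<lambda>n. \<exists>xs. wpath G C u w xs \<and> length xs = n" n id, OF n]
  obtain ys where ys: "wpath G C u w ys"
    and minl: "\<And>zs. wpath G C u w zs \<Longrightarrow> length ys \<le> length zs" by auto
  have "distinct ys"
  proof (rule ccontr)
    assume "\<not> distinct ys"
    then obtain as z bs cs where eq: "ys = as @ [z] @ bs @ [z] @ cs"
      using not_distinct_decomp by blast
    define zs where "zs = as @ [z] @ cs"
    have wy: "walk (edges G) ys" using ys unfolding wpath_def by blast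
    have w1: "walk (edges G) (as @ [z])" using wy unfolding eq
      by (metis append_assoc walk_append)
    have w2: "walk (edges G) ([z] @ cs)" using wy unfolding eq
      by (metis walk_append)
    have "walk (edges G) zs" unfolding zs_def using w1 w2 walk_append[of "edges G" "as @ [z]" cs]
      walk_append[of "edges G" "[z]" cs]
      by (cases cs) auto
    moreover have "hd zs = u" using ys unfolding eq zs_def wpath_def by (cases as) auto
    moreover have "last zs = w" using ys unfolding eq zs_def wpath_def by (cases cs) auto
    moreover have "set zs \<subseteq> C" using ys unfolding eq zs_def wpath_def by auto
    ultimately have "wpath G C u w zs" unfolding wpath_def zs_def by auto
    moreover have "length zs < length ys" unfolding zs_def eq by simp
    ultimately show False using minl by fastforce
  qed
  then show ?thesis using ys by blast
qed

lemma tree_nbrs_sep: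
  assumes T: "fin_tree T" and a: "a \<in> verts T"
    and C: "C \<in> comps T (verts T - {a})" and uw: "u \<in> C" "w \<in> C" "u \<noteq> w"
    and e: "(a, u) \<in> edges T" "(a, w) \<in> edges T"
  shows False
proof -
  have fg: "fin_graph T" using T unfolding fin_tree_def by blast
  have cC: "connected_set T C" using C unfolding comps_def by blast
  obtain xs0 where "wpath T C u w xs0" using wpath_exists[OF cC uw(1,2)] by blast
  then obtain xs where xs: "wpath T C u w xs" "distinct xs" using wpath_distinct by blast
  have Csub: "C \<subseteq> verts T - {a}" using C unfolding comps_def by blast
  have aC: "a \<notin> set xs" using xs Csub unfolding wpath_def by blast
  have len: "length xs \<ge> 2"
  proof (rule ccontr)
    assume "\<not> length xs \<ge> 2"
    moreover have "length xs \<noteq> 0" using xs unfolding wpath_def by simp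
    ultimately have "length xs = 1" by linarith
    then obtain z where "xs = [z]" by (cases xs) auto
    then show False using xs uw unfolding wpath_def by auto
  qed
  define ys where "ys = a # xs"
  have "distinct ys" unfolding ys_def using xs aC by simp
  moreover have "length ys \<ge> 3" unfolding ys_def using len by simp
  moreover have "set ys \<subseteq> verts T" unfolding ys_def using xs Csub a unfolding wpath_def by auto
  moreover have "walk (edges T) ys"
    unfolding ys_def using xs e walk_append[of "edges T" "[a]" xs] unfolding wpath_def by auto
  moreover have "(last ys, hd ys) \<in> edges T"
    unfolding ys_def using xs e fg unfolding wpath_def fin_graph_def by auto
  ultimately have "has_cycle T" unfolding has_cycle_def walk_index by blast
  then show False using T unfolding fin_tree_def by blast
qed




lemma epi_cong:
  assumes "epi B A h" "\<forall>v\<in>verts B. h v = f v"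
  shows "epi B A f"
proof -
  have im: "h ` verts B = f ` verts B" using assms(2) by (intro image_cong) simp_all
  have ex: "(\<exists>b1 b2. b1 \<in> verts B \<and> b2 \<in> verts B \<and> h b1 = a1 \<and> h b2 = a2 \<and> (b1, b2) \<in> edges B) \<longleftrightarrow>
            (\<exists>b1 b2. b1 \<in> verts B \<and> b2 \<in> verts B \<and> f b1 = a1 \<and> f b2 = a2 \<and> (b1, b2) \<in> edges B)"
    for a1 a2
  proof
    assume "\<exists>b1 b2. b1 \<in> verts B \<and> b2 \<in> verts B \<and> h b1 = a1 \<and> h b2 = a2 \<and> (b1, b2) \<in> edges B"
    then obtain b1 b2 where "b1 \<in> verts B" "b2 \<in> verts B" "h b1 = a1" "h b2 = a2" "(b1, b2) \<in> edges B" by blast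
    then show "\<exists>b1 b2. b1 \<in> verts B \<and> b2 \<in> verts B \<and> f b1 = a1 \<and> f b2 = a2 \<and> (b1, b2) \<in> edges B"
      using assms(2) by (intro exI[of _ b1] exI[of _ b2]) simp
  next
    assume "\<exists>b1 b2. b1 \<in> verts B \<and> b2 \<in> verts B \<and> f b1 = a1 \<and> f b2 = a2 \<and> (b1, b2) \<in> edges B"
    then obtain b1 b2 where "b1 \<in> verts B" "b2 \<in> verts B" "f b1 = a1" "f b2 = a2" "(b1, b2) \<in> edges B" by blast
    then show "\<exists>b1 b2. b1 \<in> verts B \<and> b2 \<in> verts B \<and> h b1 = a1 \<and> h b2 = a2 \<and> (b1, b2) \<in> edges B"
      using assms(2) by (intro exI[of _ b1] exI[of _ b2]) simp
  qed
  show ?thesis using assms(1) unfolding epi_def im ex by simp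
qed

lemma distg_epi:
  assumes "proj_fraisse_family F" "distg F B A f"
  shows "epi B A f"
proof -
  obtain h where h: "(B, A, h) \<in> snd F" "\<forall>x\<in>verts B. h x = f x"
    using assms(2) unfolding distg_def by blast
  have "\<forall>(B, A, f)\<in>snd F. B \<in> fst F \<and> A \<in> fst F \<and> epi B A f"
    using assms(1) unfolding proj_fraisse_family_def by simp
  from bspec[OF this h(1)] have "epi B A h" by simp
  then show ?thesis using h(2) by (rule epi_cong)
qed

lemma epi_edge:
  assumes "epi B A g" "(u, v) \<in> edges B" "fin_graph B"
  shows "(g u, g v) \<in> edges A"
proof -
  have "u \<in> verts B" "v \<in> verts B" using assms(2,3) unfolding fin_graph_def by blast+
  then show ?thesis using assms(1,2) unfolding epi_def by blast
qed

lemma epi_image: "epi B A g \<Longrightarrow> g ` verts B = verts A"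
  unfolding epi_def by simp

lemma split_verts: "verts (split_edge G a b c) = insert c (verts G)"
  unfolding split_edge_def verts_def by simp

lemma split_edges: "edges (split_edge G a b c) =
   (edges G - {(a, b), (b, a)}) \<union> {(a, c), (c, a), (c, b), (b, c), (c, c)}"
  unfolding split_edge_def edges_def by simp

locale setting =
  fixes F :: family and G :: "nat \<Rightarrow> graph" and fs :: "nat \<Rightarrow> nat \<Rightarrow> nat \<Rightarrow> nat" and x :: "nat \<Rightarrow> nat"
  assumes fam: "proj_fraisse_family F"
    and trees: "\<forall>T\<in>fst F. fin_tree T"
    and asplit: "allows_splitting_edges F"
    and seq: "fraisse_sequence F G fs"
    and wc: "weak_coh_lim G fs x"
begin

abbreviation "L \<equiv> lim_pts G fs"
abbreviation "LE \<equiv> lim_edges G fs"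

lemma seq1: "G n \<in> fst F" using seq unfolding fraisse_sequence_def by blast
lemma seq2: "n \<le> m \<Longrightarrow> distg F (G m) (G n) (fs m n)" using seq unfolding fraisse_sequence_def by blast
lemma fs_id: "v \<in> verts (G n) \<Longrightarrow> fs n n v = v" using seq unfolding fraisse_sequence_def by blast
lemma fs_comp: "n \<le> m \<Longrightarrow> m \<le> k \<Longrightarrow> v \<in> verts (G k) \<Longrightarrow> fs m n (fs k m v) = fs k n v"
  using seq unfolding fraisse_sequence_def by blast
lemma seq6: "A \<in> fst F \<Longrightarrow> distg F A (G m) f \<Longrightarrow>
   \<exists>n\<ge>m. \<exists>g. distg F (G n) A g \<and> (\<forall>v\<in>verts (G n). f (g v) = fs n m v)"
proof -
  assume a: "A \<in> fst F" "distg F A (G m) f"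
  have "\<forall>m A f. A \<in> fst F \<and> distg F A (G m) f \<longrightarrow>
        (\<exists>n\<ge>m. \<exists>g. distg F (G n) A g \<and> (\<forall>x\<in>verts (G n). f (g x) = fs n m x))"
    using seq unfolding fraisse_sequence_def by blast
  then show ?thesis using a by blast
qed

lemma tree_G: "fin_tree (G n)" using seq1 trees by blast
lemma fg: "fin_graph (G n)" using tree_G unfolding fin_tree_def by blast

lemma edge_verts: "(u, v) \<in> edges (G n) \<Longrightarrow> u \<in> verts (G n) \<and> v \<in> verts (G n)"
  using fg[of n] unfolding fin_graph_def by blast
lemma edge_refl: "u \<in> verts (G n) \<Longrightarrow> (u, u) \<in> edges (G n)"
  using fg[of n] unfolding fin_graph_def by blast
lemma edge_sym: "(u, v) \<in> edges (G n) \<Longrightarrow> (v, u) \<in> edges (G n)"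
  using fg[of n] unfolding fin_graph_def by blast

lemma fs_epi: "n \<le> m \<Longrightarrow> epi (G m) (G n) (fs m n)"
  using distg_epi[OF fam seq2] by blast
lemma fs_verts: "n \<le> m \<Longrightarrow> v \<in> verts (G m) \<Longrightarrow> fs m n v \<in> verts (G n)"
  using epi_image[OF fs_epi] by blast
lemma fs_surj: "n \<le> m \<Longrightarrow> w \<in> verts (G n) \<Longrightarrow> \<exists>v\<in>verts (G m). fs m n v = w"
  using epi_image[OF fs_epi] by (metis imageE)
lemma fs_edge: "n \<le> m \<Longrightarrow> (u, v) \<in> edges (G m) \<Longrightarrow> (fs m n u, fs m n v) \<in> edges (G n)"
  using epi_edge[OF fs_epi _ fg] by blast

lemma limD: "y \<in> L \<Longrightarrow> y i \<in> verts (G i)" unfolding lim_pts_def by blast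
lemma limD2: "y \<in> L \<Longrightarrow> n \<le> m \<Longrightarrow> fs m n (y m) = y n" unfolding lim_pts_def by blast

lemma LE_D: "(y, z) \<in> LE \<Longrightarrow> y \<in> L \<and> z \<in> L \<and> (\<forall>i. (y i, z i) \<in> edges (G i))"
  unfolding lim_edges_def by blast
lemma LE_I: "y \<in> L \<Longrightarrow> z \<in> L \<Longrightarrow> (\<forall>i. (y i, z i) \<in> edges (G i)) \<Longrightarrow> (y, z) \<in> LE"
  unfolding lim_edges_def by blast
lemma LE_refl: "y \<in> L \<Longrightarrow> (y, y) \<in> LE"
  by (rule LE_I) (simp_all add: edge_refl limD)
lemma LE_sym: "(y, z) \<in> LE \<Longrightarrow> (z, y) \<in> LE"
  using LE_D LE_I edge_sym by metis

lemma nonedge_persist: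
  assumes "y \<in> L" "z \<in> L" "n \<le> m" "(y n, z n) \<notin> edges (G n)"
  shows "(y m, z m) \<notin> edges (G m)"
proof
  assume "(y m, z m) \<in> edges (G m)"
  from fs_edge[OF assms(3) this] show False using assms limD2 by simp
qed

lemma not_LE:
  assumes "y \<in> L" "z \<in> L" "(y, z) \<notin> LE"
  shows "\<exists>i. (y i, z i) \<notin> edges (G i)"
  using assms LE_I by blast

lemma lift:
  assumes v: "v \<in> verts (G n)"
  shows "\<exists>y\<in>L. y n = v"
proof -
  define z where "z = rec_nat v (\<lambda>k zk. SOME w. w \<in> verts (G (Suc (n + k))) \<and> fs (Suc (n + k)) (n + k) w = zk)"
  have z0: "z 0 = v" unfolding z_def by simp
  have zS: "z (Suc k) = (SOME w. w \<in> verts (G (Suc (n + k))) \<and> fs (Suc (n + k)) (n + k) w = z k)" for k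
    unfolding z_def by simp
  have zv: "z k \<in> verts (G (n + k)) \<and> (k > 0 \<longrightarrow> fs (n + k) (n + k - 1) (z k) = z (k - 1))" for k
  proof (induction k)
    case 0 then show ?case using z0 v by simp
  next
    case (Suc k)
    have "\<exists>w. w \<in> verts (G (Suc (n + k))) \<and> fs (Suc (n + k)) (n + k) w = z k"
      using fs_surj[of "n + k" "Suc (n + k)" "z k"] Suc.IH by auto
    from someI_ex[OF this] show ?case unfolding zS by simp
  qed
  have A: "fs (n + k') (n + k) (z k') = z k" if "k \<le> k'" for k k'
    using that
  proof (induction k' rule: dec_induct)
    case base then show ?case using fs_id zv by blast
  next
    case (step k')
    have s: "fs (n + Suc k') (n + k') (z (Suc k')) = z k'" using zv[of "Suc k'"] by simp
    have "fs (n + Suc k') (n + k) (z (Suc k')) = fs (n + k') (n + k) (fs (n + Suc k') (n + k') (z (Suc k')))"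
      using fs_comp[of "n + k" "n + k'" "n + Suc k'" "z (Suc k')"] step.hyps zv[of "Suc k'"] by simp
    then show ?case using s step.IH by simp
  qed
  define y where "y m = (if m \<le> n then fs n m v else z (m - n))" for m
  have yv: "y i \<in> verts (G i)" for i
  proof (cases "i \<le> n")
    case True then show ?thesis unfolding y_def using fs_verts v by simp
  next
    case False then show ?thesis unfolding y_def using zv[of "i - n"] by simp
  qed
  have yc: "fs m' n' (y m') = y n'" if "n' \<le> m'" for n' m'
  proof (cases "m' \<le> n")
    case True
    then show ?thesis unfolding y_def using that fs_comp[of n' m' n v] v by simp
  next
    case False
    show ?thesis
    proof (cases "n' \<le> n")
      case True
      have "fs m' n' (z (m' - n)) = fs n n' (fs m' n (z (m' - n)))"
        using fs_comp[of n' n m' "z (m' - n)"] True False zv[of "m' - n"] by simp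
      also have "fs m' n (z (m' - n)) = z 0" using A[of 0 "m' - n"] False by simp
      finally show ?thesis unfolding y_def using True False z0 by simp
    next
      case nn: False
      have "fs (n + (m' - n)) (n + (n' - n)) (z (m' - n)) = z (n' - n)" using A[of "n' - n" "m' - n"] that by simp
      then show ?thesis unfolding y_def using nn False that by simp
    qed
  qed
  have "y \<in> L" unfolding lim_pts_def using yv yc by blast
  moreover have "y n = v" unfolding y_def using fs_id v by simp
  ultimately show ?thesis by blast
qed

lemma split_ext:
  assumes e: "(a, b) \<in> edges (G m)" and ab: "a \<noteq> b"
  shows "\<exists>n c g. m \<le> n \<and> c \<notin> verts (G m) \<and> epi (G n) (split_edge (G m) a b c) g \<and>
     (\<forall>v\<in>verts (G n). (if g v = c then b else g v) = fs n m v)"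
proof -
  have "\<forall>G\<in>fst F. \<forall>a b. (a, b) \<in> edges G \<and> a \<noteq> b \<longrightarrow>
        (\<exists>c. c \<notin> verts G \<and> split_edge G a b c \<in> fst F \<and>
             distg F (split_edge G a b c) G (\<lambda>x. if x = c then a else x) \<and>
             distg F (split_edge G a b c) G (\<lambda>x. if x = c then b else x))"
    using asplit unfolding allows_splitting_edges_def by simp
  then obtain c where c: "c \<notin> verts (G m)" "split_edge (G m) a b c \<in> fst F"
     "distg F (split_edge (G m) a b c) (G m) (\<lambda>x. if x = c then b else x)"
    using seq1[of m] e ab by blast
  obtain n g where n: "n \<ge> m" "distg F (G n) (split_edge (G m) a b c) g"
    "\<forall>v\<in>verts (G n). (\<lambda>x. if x = c then b else x) (g v) = fs n m v"
    using seq6[OF c(2) c(3)] by blast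
  have "epi (G n) (split_edge (G m) a b c) g" by (rule distg_epi[OF fam n(2)])
  then show ?thesis using n c by (intro exI[of _ n] exI[of _ c] exI[of _ g]) simp
qed

lemma LE_trans:
  assumes ab: "(p, q) \<in> LE" and bc: "(q, r) \<in> LE"
  shows "(p, r) \<in> LE"
proof -
  have L: "p \<in> L" "q \<in> L" "r \<in> L" using LE_D ab bc by blast+
  have "(p m, r m) \<in> edges (G m)" for m
  proof (rule ccontr)
    assume nac: "(p m, r m) \<notin> edges (G m)"
    have e1: "(p m, q m) \<in> edges (G m)" using LE_D ab by blast
    have e2: "(q m, r m) \<in> edges (G m)" using LE_D bc by blast
    have pq: "p m \<noteq> q m" using nac e2 by auto
    obtain n c g where n: "m \<le> n" and c: "c \<notin> verts (G m)"
      and g: "epi (G n) (split_edge (G m) (p m) (q m) c) g"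
      and col: "\<forall>v\<in>verts (G n). (if g v = c then q m else g v) = fs n m v"
      using split_ext[OF e1 pq] by blast
    have vm: "p m \<in> verts (G m)" "q m \<in> verts (G m)" "r m \<in> verts (G m)" using L limD by blast+
    have vn: "p n \<in> verts (G n)" "q n \<in> verts (G n)" "r n \<in> verts (G n)" using L limD by blast+
    have cp: "c \<noteq> p m" "c \<noteq> q m" "c \<noteq> r m" using c vm by blast+
    have fp: "(if g (p n) = c then q m else g (p n)) = p m" using col vn(1) limD2[OF L(1) n] by simp
    have fq: "(if g (q n) = c then q m else g (q n)) = q m" using col vn(2) limD2[OF L(2) n] by simp
    have fr: "(if g (r n) = c then q m else g (r n)) = r m" using col vn(3) limD2[OF L(3) n] by simp
    have gp: "g (p n) = p m" using fp pq by (cases "g (p n) = c") simp_all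
    have en1: "(g (p n), g (q n)) \<in> edges (split_edge (G m) (p m) (q m) c)"
      using epi_edge[OF g _ fg] LE_D ab by blast
    have en2: "(g (q n), g (r n)) \<in> edges (split_edge (G m) (p m) (q m) c)"
      using epi_edge[OF g _ fg] LE_D bc by blast
    have gq: "g (q n) = c"
    proof (rule ccontr)
      assume "g (q n) \<noteq> c"
      then have "g (q n) = q m" using fq by simp
      then have "(p m, q m) \<in> edges (split_edge (G m) (p m) (q m) c)" using en1 gp by simp
      then show False unfolding split_edges using pq cp by auto
    qed
    have "(c, g (r n)) \<in> edges (split_edge (G m) (p m) (q m) c)" using en2 gq by simp
    then have "g (r n) \<in> {p m, q m, c}" unfolding split_edges using c edge_verts by auto
    then have "r m = p m \<or> r m = q m" using fr cp by auto
    then show False using nac e1 edge_refl vm by auto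
  qed
  then show ?thesis using L by (intro LE_I) simp_all
qed

end




context setting begin

lemma xL: "x \<in> L" using wc unfolding weak_coh_lim_def by blast

definition k0 where "k0 = (SOME k. \<forall>l>k. weak_coh_pt (G (Suc l)) (G l) (fs (Suc l) l) (x l) (x (Suc l)))"

abbreviation "l0 \<equiv> Suc k0"

lemma wcp: "l0 \<le> m \<Longrightarrow> weak_coh_pt (G (Suc m)) (G m) (fs (Suc m) m) (x m) (x (Suc m))"
proof -
  assume m: "l0 \<le> m"
  have "\<exists>k. \<forall>l>k. weak_coh_pt (G (Suc l)) (G l) (fs (Suc l) l) (x l) (x (Suc l))"
    using wc unfolding weak_coh_lim_def by blast
  from someI_ex[OF this] have "\<forall>l>k0. weak_coh_pt (G (Suc l)) (G l) (fs (Suc l) l) (x l) (x (Suc l))"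
    unfolding k0_def .
  then show ?thesis using m by simp
qed

abbreviation S where "S m \<equiv> verts (G m) - {x m}"
abbreviation K where "K m \<equiv> comps (G m) (S m)"

definition pp where "pp m = (SOME p. inj_on p (K m) \<and> p ` K m \<subseteq> K (Suc m) \<and>
   (\<forall>C\<in>K m. {v \<in> verts (G (Suc m)). fs (Suc m) m v \<in> C} \<subseteq> p C))"

lemma pp_props:
  assumes "l0 \<le> m"
  shows "inj_on (pp m) (K m)" "pp m ` K m \<subseteq> K (Suc m)"
    "\<And>C. C \<in> K m \<Longrightarrow> {v \<in> verts (G (Suc m)). fs (Suc m) m v \<in> C} \<subseteq> pp m C"
proof -
  have "\<exists>p. inj_on p (K m) \<and> p ` K m \<subseteq> K (Suc m) \<and>
   (\<forall>C\<in>K m. {v \<in> verts (G (Suc m)). fs (Suc m) m v \<in> C} \<subseteq> p C)"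
    using wcp[OF assms] unfolding weak_coh_pt_def by blast
  from someI_ex[OF this] have P: "inj_on (pp m) (K m) \<and> pp m ` K m \<subseteq> K (Suc m) \<and>
   (\<forall>C\<in>K m. {v \<in> verts (G (Suc m)). fs (Suc m) m v \<in> C} \<subseteq> pp m C)"
    unfolding pp_def .
  show "inj_on (pp m) (K m)" "pp m ` K m \<subseteq> K (Suc m)" using P by simp_all
  show "\<And>C. C \<in> K m \<Longrightarrow> {v \<in> verts (G (Suc m)). fs (Suc m) m v \<in> C} \<subseteq> pp m C" using P by blast
qed

lemma ppj:
  shows "inj_on (pp (l0 + j)) (K (l0 + j))" "pp (l0 + j) ` K (l0 + j) \<subseteq> K (Suc (l0 + j))"
    "C \<in> K (l0 + j) \<Longrightarrow> {v \<in> verts (G (Suc (l0 + j))). fs (Suc (l0 + j)) (l0 + j) v \<in> C} \<subseteq> pp (l0 + j) C"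
  using pp_props[OF le_add1[of l0 j]] by simp_all

primrec Bseq :: "nat set \<Rightarrow> nat \<Rightarrow> nat set" where
  "Bseq C 0 = C"
| "Bseq C (Suc j) = pp (l0 + j) (Bseq C j)"

lemma B1: "C \<in> K l0 \<Longrightarrow> Bseq C j \<in> K (l0 + j)"
proof (induction j)
  case 0 then show ?case by simp
next
  case (Suc j)
  have "pp (l0 + j) (Bseq C j) \<in> K (Suc (l0 + j))"
    using ppj(2)[of "j"] Suc by blast
  then show ?case by simp
qed

lemma Bsub: "C \<in> K l0 \<Longrightarrow> Bseq C j \<subseteq> S (l0 + j)"
  using B1 comps_sub by blast

lemma B2:
  assumes C: "C \<in> K l0" and jj: "j \<le> j'"
  shows "v \<in> verts (G (l0 + j')) \<Longrightarrow> fs (l0 + j') (l0 + j) v \<in> Bseq C j \<Longrightarrow> v \<in> Bseq C j'"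
  using jj
proof (induction j' arbitrary: v rule: dec_induct)
  case base then show ?case using fs_id by simp
next
  case (step j')
  define w where "w = fs (l0 + Suc j') (l0 + j') v"
  have wv: "w \<in> verts (G (l0 + j'))" unfolding w_def using fs_verts step.prems(1) by simp
  have "fs (l0 + j') (l0 + j) w = fs (l0 + Suc j') (l0 + j) v"
    unfolding w_def using fs_comp[of "l0 + j" "l0 + j'" "l0 + Suc j'" v] step.hyps step.prems(1) by simp
  then have "w \<in> Bseq C j'" using step.IH[OF wv] step.prems(2) by simp
  then have "v \<in> {v \<in> verts (G (Suc (l0 + j'))). fs (Suc (l0 + j')) (l0 + j') v \<in> Bseq C j'}"
    using step.prems(1) unfolding w_def by simp
  also have "\<dots> \<subseteq> pp (l0 + j') (Bseq C j')" using ppj(3)[where j="j'"] B1[OF C] by simp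
  finally show ?case by simp
qed

lemma B3_step:
  assumes C: "C \<in> K l0" and v: "v \<in> Bseq C (Suc j)"
  shows "fs (Suc (l0 + j)) (l0 + j) v \<in> Bseq C j \<union> {x (l0 + j)}"
proof (cases "fs (Suc (l0 + j)) (l0 + j) v = x (l0 + j)")
  case True then show ?thesis by simp
next
  case False
  have vv: "v \<in> verts (G (Suc (l0 + j)))" using Bsub[OF C, of "Suc j"] v by auto
  have wv: "fs (Suc (l0 + j)) (l0 + j) v \<in> S (l0 + j)" using fs_verts[of "l0 + j" "Suc (l0 + j)" v] vv False by simp
  obtain D where D: "D \<in> K (l0 + j)" "fs (Suc (l0 + j)) (l0 + j) v \<in> D"
    using comps_cover[OF wv] by blast
  have "v \<in> pp (l0 + j) D" using ppj(3)[of D j] D vv by auto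
  moreover have "pp (l0 + j) D \<in> K (Suc (l0 + j))" using ppj(2)[of "j"] D by auto
  moreover have "Bseq C (Suc j) \<in> K (Suc (l0 + j))" using B1[OF C, of "Suc j"] by simp
  ultimately have "pp (l0 + j) D = Bseq C (Suc j)" using comps_disj v by blast
  then have "pp (l0 + j) D = pp (l0 + j) (Bseq C j)" by simp
  then have "D = Bseq C j" using ppj(1)[of "j"] D(1) B1[OF C, of j] unfolding inj_on_def by auto
  then show ?thesis using D by simp
qed

lemma B3:
  assumes C: "C \<in> K l0" and jj: "j \<le> j'"
  shows "v \<in> Bseq C j' \<Longrightarrow> fs (l0 + j') (l0 + j) v \<in> Bseq C j \<union> {x (l0 + j)}"
  using jj
proof (induction j' arbitrary: v rule: dec_induct)
  case base
  have "v \<in> verts (G (l0 + j))" using Bsub[OF C, of j] base by auto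
  then show ?case using fs_id base by simp
next
  case (step j')
  define w where "w = fs (l0 + Suc j') (l0 + j') v"
  have vv: "v \<in> verts (G (l0 + Suc j'))" using Bsub[OF C, of "Suc j'"] step.prems by auto
  have w: "w \<in> Bseq C j' \<union> {x (l0 + j')}" unfolding w_def using B3_step[OF C step.prems] by simp
  have eq: "fs (l0 + j') (l0 + j) w = fs (l0 + Suc j') (l0 + j) v"
    unfolding w_def using fs_comp[of "l0 + j" "l0 + j'" "l0 + Suc j'" v] step.hyps vv by simp
  show ?case
  proof (cases "w \<in> Bseq C j'")
    case True then show ?thesis using step.IH eq by metis
  next
    case False
    then have "w = x (l0 + j')" using w by simp
    then have "fs (l0 + j') (l0 + j) w = x (l0 + j)" using limD2[OF xL] step.hyps by simp
    then show ?thesis using eq by simp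
  qed
qed

lemma B4:
  assumes C: "C \<in> K l0" and D: "D \<in> K l0" and CD: "C \<noteq> D"
  shows "Bseq C j \<inter> Bseq D j = {}"
proof -
  have ne: "Bseq C j \<noteq> Bseq D j"
  proof (induction j)
    case 0 then show ?case using CD by simp
  next
    case (Suc j)
    show ?case
    proof
      assume "Bseq C (Suc j) = Bseq D (Suc j)"
      then have "pp (l0 + j) (Bseq C j) = pp (l0 + j) (Bseq D j)" by simp
      then have "Bseq C j = Bseq D j"
        using ppj(1)[of "j"] B1[OF C, of j] B1[OF D, of j] unfolding inj_on_def by auto
      then show False using Suc.IH by simp
    qed
  qed
  show ?thesis
  proof (rule ccontr)
    assume "Bseq C j \<inter> Bseq D j \<noteq> {}"
    then obtain v where "v \<in> Bseq C j" "v \<in> Bseq D j" by blast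
    then have "Bseq C j = Bseq D j" using comps_disj B1[OF C, of j] B1[OF D, of j] by blast
    then show False using ne by simp
  qed
qed

end




lemma three_elems:
  assumes "3 \<le> card N"
  shows "\<exists>a b c. a \<in> N \<and> b \<in> N \<and> c \<in> N \<and> a \<noteq> b \<and> a \<noteq> c \<and> b \<noteq> c"
proof -
  have "Suc 2 \<le> card N" using assms by simp
  then obtain a B where aB: "N = insert a B" "a \<notin> B" "2 \<le> card B" unfolding card_le_Suc_iff by blast
  have "Suc 1 \<le> card B" using aB by simp
  then obtain b B' where bB: "B = insert b B'" "b \<notin> B'" "1 \<le> card B'" unfolding card_le_Suc_iff by blast
  have "Suc 0 \<le> card B'" using bB by simp
  then obtain c B'' where cB: "B' = insert c B''" "c \<notin> B''" unfolding card_le_Suc_iff by blast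
  show ?thesis using aB bB cB by (intro exI[of _ a] exI[of _ b] exI[of _ c]) auto
qed

context setting begin

lemma topspace_lim: "topspace (lim_top G fs) = L"
proof -
  have "L \<subseteq> topspace (product_topology (\<lambda>i. discrete_topology (verts (G i))) UNIV)"
    using limD by (auto simp: PiE_iff)
  then show ?thesis unfolding lim_top_def by auto
qed

lemma cyl_open: "openin (lim_top G fs) {y \<in> L. y m \<in> V}"
proof -
  let ?P = "product_topology (\<lambda>i. discrete_topology (verts (G i))) UNIV"
  have o: "openin ?P {y \<in> topspace ?P. y m \<in> V \<inter> verts (G m)}"
    by (rule openin_continuous_map_preimage[OF continuous_map_product_projection]) simp_all
  have L: "L \<subseteq> topspace ?P" using limD by (auto simp: PiE_iff)
  have "{y \<in> L. y m \<in> V} = {y \<in> topspace ?P. y m \<in> V \<inter> verts (G m)} \<inter> L"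
    using L limD by auto
  then show ?thesis unfolding lim_top_def openin_subtopology using o by blast
qed

definition W :: "(nat \<Rightarrow> nat set) \<Rightarrow> (nat \<Rightarrow> nat) set" where
  "W T = {y \<in> L. \<exists>j. y (l0 + j) \<in> T j \<and> (x (l0 + j), y (l0 + j)) \<notin> edges (G (l0 + j))}"

definition good :: "(nat \<Rightarrow> nat set) \<Rightarrow> bool" where
  "good T \<longleftrightarrow> (\<forall>j. T j \<subseteq> S (l0 + j)) \<and>
     (\<forall>j u v. u \<in> T j \<longrightarrow> v \<in> S (l0 + j) \<longrightarrow> (u, v) \<in> edges (G (l0 + j)) \<longrightarrow> v \<in> T j) \<and>
     (\<forall>j j' v. j \<le> j' \<longrightarrow> v \<in> S (l0 + j') \<longrightarrow> fs (l0 + j') (l0 + j) v \<in> T j \<longrightarrow> v \<in> T j')"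

lemma W_persist:
  assumes g: "good T" and y: "y \<in> L" and jj: "j \<le> j'"
    and yt: "y (l0 + j) \<in> T j" and na: "(x (l0 + j), y (l0 + j)) \<notin> edges (G (l0 + j))"
  shows "y (l0 + j') \<in> T j' \<and> (x (l0 + j'), y (l0 + j')) \<notin> edges (G (l0 + j'))"
proof -
  have na': "(x (l0 + j'), y (l0 + j')) \<notin> edges (G (l0 + j'))"
    by (rule nonedge_persist[OF xL y _ na]) (use jj in simp)
  have "y (l0 + j') \<noteq> x (l0 + j')" using na' edge_refl limD[OF y] by metis
  then have s: "y (l0 + j') \<in> S (l0 + j')" using limD[OF y] by simp
  have "fs (l0 + j') (l0 + j) (y (l0 + j')) = y (l0 + j)" using limD2[OF y] jj by simp
  then have "y (l0 + j') \<in> T j'" using g s yt jj unfolding good_def by metis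
  then show ?thesis using na' by simp
qed

lemma W_L: "W T \<subseteq> L" unfolding W_def by blast

lemma W_nonadj: "z \<in> W T \<Longrightarrow> (x, z) \<notin> LE"
  unfolding W_def using LE_D by blast

lemma W_sat:
  assumes g: "good T" and y: "y \<in> L" and z: "z \<in> W T" and yz: "(y, z) \<in> LE" and xy: "(x, y) \<notin> LE"
  shows "y \<in> W T"
proof -
  obtain j0 where j0: "z (l0 + j0) \<in> T j0" "(x (l0 + j0), z (l0 + j0)) \<notin> edges (G (l0 + j0))" and zL: "z \<in> L"
    using z unfolding W_def by blast
  obtain i where i: "(x i, y i) \<notin> edges (G i)" using not_LE[OF xL y xy] by blast
  define j where "j = j0 + i"
  have zj: "z (l0 + j) \<in> T j" using W_persist[OF g zL _ j0] unfolding j_def by simp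
  have nj: "(x (l0 + j), y (l0 + j)) \<notin> edges (G (l0 + j))"
    by (rule nonedge_persist[OF xL y _ i]) (simp add: j_def)
  have "y (l0 + j) \<noteq> x (l0 + j)" using nj edge_refl limD[OF y] by metis
  then have s: "y (l0 + j) \<in> S (l0 + j)" using limD[OF y] by simp
  have e: "(z (l0 + j), y (l0 + j)) \<in> edges (G (l0 + j))" using LE_D[OF LE_sym[OF yz]] by blast
  have "y (l0 + j) \<in> T j" using g zj s e unfolding good_def by blast
  then show ?thesis unfolding W_def using y nj by blast
qed

lemma W_disj:
  assumes g: "good T" "good T'" and d: "\<forall>j. T j \<inter> T' j = {}"
  shows "W T \<inter> W T' = {}"
proof (rule ccontr)
  assume "W T \<inter> W T' \<noteq> {}"
  then obtain y j1 j2 where y: "y \<in> L" and j1: "y (l0 + j1) \<in> T j1" "(x (l0 + j1), y (l0 + j1)) \<notin> edges (G (l0 + j1))"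
    and j2: "y (l0 + j2) \<in> T' j2" "(x (l0 + j2), y (l0 + j2)) \<notin> edges (G (l0 + j2))"
    unfolding W_def by blast
  have "y (l0 + (j1 + j2)) \<in> T (j1 + j2)" using W_persist[OF g(1) y _ j1] by simp
  moreover have "y (l0 + (j1 + j2)) \<in> T' (j1 + j2)" using W_persist[OF g(2) y _ j2] by simp
  ultimately show False using d by blast
qed

lemma W_cover:
  assumes y: "y \<in> L" and xy: "(x, y) \<notin> LE" and cov: "\<forall>j. S (l0 + j) \<subseteq> T0 j \<union> T1 j \<union> T2 j"
  shows "y \<in> W T0 \<union> W T1 \<union> W T2"
proof -
  obtain i where i: "(x i, y i) \<notin> edges (G i)" using not_LE[OF xL y xy] by blast
  have nj: "(x (l0 + i), y (l0 + i)) \<notin> edges (G (l0 + i))"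
    by (rule nonedge_persist[OF xL y _ i]) simp
  have "y (l0 + i) \<noteq> x (l0 + i)" using nj edge_refl limD[OF y] by metis
  then have s: "y (l0 + i) \<in> S (l0 + i)" using limD[OF y] by simp
  then have "y (l0 + i) \<in> T0 i \<or> y (l0 + i) \<in> T1 i \<or> y (l0 + i) \<in> T2 i" using cov by blast
  then show ?thesis unfolding W_def using y nj by blast
qed

lemma W_open: "openin (lim_top G fs) (W T)"
proof -
  have "W T = \<Union>((\<lambda>j. {y \<in> L. y (l0 + j) \<in> T j - {v. (x (l0 + j), v) \<in> edges (G (l0 + j))}}) ` UNIV)"
    unfolding W_def by blast
  moreover have "openin (lim_top G fs) (\<Union>((\<lambda>j. {y \<in> L. y (l0 + j) \<in> T j - {v. (x (l0 + j), v) \<in> edges (G (l0 + j))}}) ` UNIV))"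
    by (rule openin_Union) (use cyl_open in blast)
  ultimately show ?thesis by simp
qed

lemma real_eq:
  assumes "y \<in> L" "z \<in> L"
  shows "realize G fs y = realize G fs z \<longleftrightarrow> (y, z) \<in> LE"
proof
  assume "realize G fs y = realize G fs z"
  moreover have "z \<in> realize G fs z" unfolding realize_def using LE_refl[OF assms(2)] by simp
  ultimately show "(y, z) \<in> LE" unfolding realize_def by blast
next
  assume yz: "(y, z) \<in> LE"
  show "realize G fs y = realize G fs z"
    unfolding realize_def using yz LE_trans LE_sym by blast
qed

lemma topspace_real: "topspace (realization G fs) = realize G fs ` L"
  unfolding realization_def topspace_quotient topspace_lim by simp

lemma pre_O:
  assumes g: "good T"
  shows "{y \<in> L. realize G fs y \<in> realize G fs ` W T} = W T"
proof
  show "W T \<subseteq> {y \<in> L. realize G fs y \<in> realize G fs ` W T}" using W_L by blast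
  show "{y \<in> L. realize G fs y \<in> realize G fs ` W T} \<subseteq> W T"
  proof
    fix y assume "y \<in> {y \<in> L. realize G fs y \<in> realize G fs ` W T}"
    then obtain z where y: "y \<in> L" and z: "z \<in> W T" and eq: "realize G fs y = realize G fs z" by blast
    have zL: "z \<in> L" using z W_L by blast
    have yz: "(y, z) \<in> LE" using eq real_eq[OF y zL] by simp
    have "(x, y) \<notin> LE"
    proof
      assume "(x, y) \<in> LE"
      then have "(x, z) \<in> LE" using yz LE_trans by blast
      then show False using W_nonadj[OF z] by simp
    qed
    then show "y \<in> W T" using W_sat[OF g y z yz] by simp
  qed
qed

lemma O_open:
  assumes g: "good T"
  shows "openin (realization G fs) (realize G fs ` W T)"
  unfolding realization_def openin_quotient topspace_lim pre_O[OF g]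
  using W_L W_open by blast

lemma O_noP: "realize G fs x \<notin> realize G fs ` W T"
proof
  assume "realize G fs x \<in> realize G fs ` W T"
  then obtain z where z: "z \<in> W T" "realize G fs x = realize G fs z" by blast
  have "(x, z) \<in> LE" using z real_eq[OF xL] W_L by blast
  then show False using W_nonadj[OF z(1)] by simp
qed

lemma O_disj:
  assumes g: "good T" "good T'" and d: "W T \<inter> W T' = {}"
  shows "realize G fs ` W T \<inter> realize G fs ` W T' = {}"
proof (rule ccontr)
  assume "realize G fs ` W T \<inter> realize G fs ` W T' \<noteq> {}"
  then obtain y z where y: "y \<in> W T" and z: "z \<in> W T'" and eq: "realize G fs z = realize G fs y" by blast
  have "z \<in> {y \<in> L. realize G fs y \<in> realize G fs ` W T}" using z W_L y eq by blast
  then have "z \<in> W T" using pre_O[OF g(1)] by simp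
  then show False using z d by blast
qed

lemma W_nonempty:
  assumes C: "C \<in> K l0" and u: "u \<in> C" and e: "(x l0, u) \<in> edges (G l0)"
  shows "W (Bseq C) \<noteq> {}"
proof -
  have uS: "u \<in> S l0" using compsD(1)[OF C] u by blast
  then have xu: "x l0 \<noteq> u" by simp
  obtain n c g where n: "l0 \<le> n" and c: "c \<notin> verts (G l0)"
    and g: "epi (G n) (split_edge (G l0) (x l0) u c) g"
    and col: "\<forall>v\<in>verts (G n). (if g v = c then u else g v) = fs n l0 v"
    using split_ext[OF e xu] by blast
  have cx: "c \<noteq> x l0" "c \<noteq> u" using c uS limD[OF xL, of l0] by auto
  have xn: "x n \<in> verts (G n)" using limD[OF xL] by simp
  have "(if g (x n) = c then u else g (x n)) = x l0" using col xn limD2[OF xL n] by simp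
  then have gx: "g (x n) = x l0" using xu by (cases "g (x n) = c") simp_all
  have "u \<in> verts (split_edge (G l0) (x l0) u c)" unfolding split_verts using uS by simp
  then obtain v where v: "v \<in> verts (G n)" "g v = u" using epi_image[OF g] by (metis imageE)
  have fv: "fs n l0 v = u" using col v cx by auto
  have nadj: "(x n, v) \<notin> edges (G n)"
  proof
    assume "(x n, v) \<in> edges (G n)"
    then have "(g (x n), g v) \<in> edges (split_edge (G l0) (x l0) u c)" by (rule epi_edge[OF g _ fg])
    then have "(x l0, u) \<in> edges (split_edge (G l0) (x l0) u c)" using gx v by simp
    then show False unfolding split_edges using cx xu by auto
  qed
  obtain y where y: "y \<in> L" "y n = v" using lift[OF v(1)] by blast
  define j where "j = n - l0"
  have nj: "l0 + j = n" unfolding j_def using n by simp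
  have "fs (l0 + j) (l0 + 0) v = u" using fv nj by simp
  then have "v \<in> Bseq C j" using B2[OF C, of 0 j v] v nj u by simp
  then have "y \<in> W (Bseq C)" unfolding W_def using y nadj nj by (metis (mono_tags, lifting) mem_Collect_eq)
  then show ?thesis by blast
qed

lemma good_B:
  assumes C: "C \<in> K l0"
  shows "good (Bseq C)"
  unfolding good_def
proof (intro conjI allI impI)
  fix j show "Bseq C j \<subseteq> S (l0 + j)" by (rule Bsub[OF C])
next
  fix j u v assume "u \<in> Bseq C j" "v \<in> S (l0 + j)" "(u, v) \<in> edges (G (l0 + j))"
  then show "v \<in> Bseq C j" using comps_adj[OF B1[OF C]] edge_sym by blast
next
  fix j j' v assume "j \<le> j'" "v \<in> S (l0 + j')" "fs (l0 + j') (l0 + j) v \<in> Bseq C j"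
  then show "v \<in> Bseq C j'" using B2[OF C] by blast
qed

lemma good_R:
  assumes C0: "C0 \<in> K l0" and C1: "C1 \<in> K l0"
  shows "good (\<lambda>j. S (l0 + j) - Bseq C0 j - Bseq C1 j)"
  unfolding good_def
proof (intro conjI allI impI)
  fix j show "S (l0 + j) - Bseq C0 j - Bseq C1 j \<subseteq> S (l0 + j)" by blast
next
  fix j u v assume u: "u \<in> S (l0 + j) - Bseq C0 j - Bseq C1 j" and v: "v \<in> S (l0 + j)"
    and e: "(u, v) \<in> edges (G (l0 + j))"
  have "v \<notin> Bseq C0 j"
  proof
    assume "v \<in> Bseq C0 j"
    then have "u \<in> Bseq C0 j" using comps_adj[OF B1[OF C0] _ _ edge_sym[OF e] e] u by blast
    then show False using u by blast
  qed
  moreover have "v \<notin> Bseq C1 j"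
  proof
    assume "v \<in> Bseq C1 j"
    then have "u \<in> Bseq C1 j" using comps_adj[OF B1[OF C1] _ _ edge_sym[OF e] e] u by blast
    then show False using u by blast
  qed
  ultimately show "v \<in> S (l0 + j) - Bseq C0 j - Bseq C1 j" using v by blast
next
  fix j j' v assume jj: "j \<le> j'" and v: "v \<in> S (l0 + j')"
    and f: "fs (l0 + j') (l0 + j) v \<in> S (l0 + j) - Bseq C0 j - Bseq C1 j"
  have "v \<notin> Bseq C0 j'" using B3[OF C0 jj, of v] f by auto
  moreover have "v \<notin> Bseq C1 j'" using B3[OF C1 jj, of v] f by auto
  ultimately show "v \<in> S (l0 + j') - Bseq C0 j' - Bseq C1 j'" using v by blast
qed

lemma final: "ramification_point (realization G fs) (realize G fs x)"
proof -
  have "weak_coh_pt (G (Suc l0)) (G l0) (fs (Suc l0) l0) (x l0) (x (Suc l0))" by (rule wcp) simp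
  then have "3 \<le> ord (G l0) (x l0)" unfolding weak_coh_pt_def by blast
  then obtain u0 u1 u2 where u: "u0 \<in> {b \<in> verts (G l0). b \<noteq> x l0 \<and> (x l0, b) \<in> edges (G l0)}"
    "u1 \<in> {b \<in> verts (G l0). b \<noteq> x l0 \<and> (x l0, b) \<in> edges (G l0)}"
    "u2 \<in> {b \<in> verts (G l0). b \<noteq> x l0 \<and> (x l0, b) \<in> edges (G l0)}"
    and ud: "u0 \<noteq> u1" "u0 \<noteq> u2" "u1 \<noteq> u2"
    unfolding ord_def using three_elems by blast
  have uS: "u0 \<in> S l0" "u1 \<in> S l0" "u2 \<in> S l0" using u by auto
  have ue: "(x l0, u0) \<in> edges (G l0)" "(x l0, u1) \<in> edges (G l0)" "(x l0, u2) \<in> edges (G l0)" using u by auto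
  obtain C0 where C0: "C0 \<in> K l0" "u0 \<in> C0" using comps_cover[OF uS(1)] by blast
  obtain C1 where C1: "C1 \<in> K l0" "u1 \<in> C1" using comps_cover[OF uS(2)] by blast
  obtain C2 where C2: "C2 \<in> K l0" "u2 \<in> C2" using comps_cover[OF uS(3)] by blast
  have xv: "x l0 \<in> verts (G l0)" using limD[OF xL] by simp
  have d01: "C0 \<noteq> C1"
  proof
    assume "C0 = C1"
    then show False using tree_nbrs_sep[OF tree_G xv C0(1) C0(2) _ ud(1) ue(1) ue(2)] C1(2) by simp
  qed
  have d02: "C0 \<noteq> C2"
  proof
    assume "C0 = C2"
    then show False using tree_nbrs_sep[OF tree_G xv C0(1) C0(2) _ ud(2) ue(1) ue(3)] C2(2) by simp
  qed
  have d12: "C1 \<noteq> C2"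
  proof
    assume "C1 = C2"
    then show False using tree_nbrs_sep[OF tree_G xv C1(1) C1(2) _ ud(3) ue(2) ue(3)] C2(2) by simp
  qed
  define T0 where "T0 = Bseq C0"
  define T1 where "T1 = Bseq C1"
  define T2 where "T2 = (\<lambda>j. S (l0 + j) - Bseq C0 j - Bseq C1 j)"
  have g: "good T0" "good T1" "good T2"
    unfolding T0_def T1_def T2_def using good_B C0 C1 good_R by blast+
  have dT: "\<forall>j. T0 j \<inter> T1 j = {}" "\<forall>j. T0 j \<inter> T2 j = {}" "\<forall>j. T1 j \<inter> T2 j = {}"
    unfolding T0_def T1_def T2_def using B4[OF C0(1) C1(1) d01] by blast+
  have dW: "W T0 \<inter> W T1 = {}" "W T0 \<inter> W T2 = {}" "W T1 \<inter> W T2 = {}"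
    using W_disj g dT by blast+
  have sub2: "Bseq C2 j \<subseteq> T2 j" for j
    unfolding T2_def using Bsub[OF C2(1), of j] B4[OF C0(1) C2(1) d02, of j] B4[OF C1(1) C2(1) d12, of j] by blast
  have "W (Bseq C2) \<subseteq> W T2" unfolding W_def using sub2 by blast
  then have neW: "W T0 \<noteq> {}" "W T1 \<noteq> {}" "W T2 \<noteq> {}"
    unfolding T0_def T1_def using W_nonempty[OF C0 ue(1)] W_nonempty[OF C1 ue(2)] W_nonempty[OF C2 ue(3)] by blast+
  define X where "X = realization G fs"
  define P where "P = realize G fs x"
  define Y where "Y = subtopology X (topspace X - {P})"
  define O0 where "O0 = realize G fs ` W T0"
  define O1 where "O1 = realize G fs ` W T1"
  define O2 where "O2 = realize G fs ` W T2"
  have openY: "openin Y (realize G fs ` W T)" if gT: "good T" for T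
  proof -
    have o: "openin X (realize G fs ` W T)" unfolding X_def by (rule O_open[OF gT])
    have "realize G fs ` W T \<subseteq> topspace X" using openin_subset[OF o] .
    then have "realize G fs ` W T = realize G fs ` W T \<inter> (topspace X - {P})"
      using O_noP unfolding P_def by blast
    then show ?thesis unfolding Y_def openin_subtopology using o by blast
  qed
  have oo: "openin Y O0" "openin Y O1" "openin Y O2" unfolding O0_def O1_def O2_def using openY g by blast+
  have dd: "O0 \<inter> O1 = {}" "O0 \<inter> O2 = {}" "O1 \<inter> O2 = {}"
    unfolding O0_def O1_def O2_def using O_disj g dW by blast+
  have nn: "O0 \<noteq> {}" "O1 \<noteq> {}" "O2 \<noteq> {}" unfolding O0_def O1_def O2_def using neW by blast+
  have cov: "topspace Y \<subseteq> O0 \<union> O1 \<union> O2"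
  proof
    fix p assume "p \<in> topspace Y"
    then have p: "p \<in> topspace X" "p \<noteq> P" unfolding Y_def by auto
    then obtain y where y: "y \<in> L" "p = realize G fs y" unfolding X_def topspace_real by blast
    have "(x, y) \<notin> LE" using p y real_eq[OF xL y(1)] unfolding P_def by auto
    moreover have "\<forall>j. S (l0 + j) \<subseteq> T0 j \<union> T1 j \<union> T2 j" unfolding T0_def T1_def T2_def by blast
    ultimately have "y \<in> W T0 \<union> W T1 \<union> W T2" using W_cover y by blast
    then show "p \<in> O0 \<union> O1 \<union> O2" unfolding O0_def O1_def O2_def using y by blast
  qed
  have "\<exists>C1 C2 C3. C1 \<in> connected_components_of Y \<and> C2 \<in> connected_components_of Y \<and>
     C3 \<in> connected_components_of Y \<and> C1 \<noteq> C2 \<and> C1 \<noteq> C3 \<and> C2 \<noteq> C3"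
    by (rule three_components[OF oo dd nn cov])
  moreover have "P \<in> topspace X" unfolding X_def P_def topspace_real using xL by blast
  ultimately show ?thesis unfolding ramification_point_def X_def P_def Y_def by blast
qed

end



theorem mainTheorem3:
  assumes fam: "proj_fraisse_family \<F>"
    and trees: "\<forall>T\<in>fst \<F>. fin_tree T"
    and mono: "\<forall>B A f. distg \<F> B A f \<longrightarrow> monotone_epi B A f"
    and split: "allows_splitting_edges \<F>"
    and seq: "fraisse_sequence \<F> G fs"
    and wc: "weak_coh_lim G fs x"
  shows "ramification_point (realization G fs) (realize G fs x)"
proof -
  have "setting \<F> G fs x" unfolding setting_def using fam trees split seq wc by simp
  then interpret setting \<F> G fs x .
  show ?thesis by (rule final)
qed

end
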